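(* Let $\epsilon_1>0$ be any constant and let $0<\epsilon_0\le\epsilon_1/5$. Let $S\subseteq V$ with $|S|=k'=k\cdot|V|^{-\epsilon_0/\log\log|V|}$, let $v$ be uniform in $S$, and define $X_i,Y_i,\alpha_i,\beta_i,q_i$ as in the context. If $\sum_{i=1}^n\beta_i>5\epsilon_1\log k/\log n$, then (for $n$ sufficiently large) $$\sum_{i\ \text{good}} q_i^2\ \ge\ \frac{\left(\tfrac15\epsilon_1\rho\right)^2}{n\log^2|A|}=\Omega(\rho^2/n),$$ where an index $i$ is good if $\alpha_i\ge H(q_i)-2q_i\log|A|$ and $\beta_i\ge\tfrac12\epsilon_1 q_i$.
   Context: Setting: $\psi$ is a 2CSP instance on variables $x_1,\dots,x_n$ with constant-size alphabet $A$. $\rho=\sqrt n\log\log n$, $k=\binom n\rho$. $V$ is the set of pairs $v=(T,y)$ with $T\subseteq[n]$, $|T|=\rho$, and $y:T\to A$ (so $|V|=\binom n\rho|A|^\rho$). For $v=(T,y)$ chosen uniformly at random from $S$: $X_i\in\{0,1\}$ is the indicator that $i\in T$; $Y_i=y(i)$ if $X_i=1$ and $Y_i=\bot$ (a fixed symbol) otherwise. Define $\alpha_i=H(X_i\mid X_{<i},Y_{<i})$, $\beta_i=H(Y_i\mid X_{\le i},Y_{<i})$, $q_i=\Pr[X_i=1]$, where $H$ is Shannon entropy (base 2) and $H(p)=-p\log p-(1-p)\log(1-p)$ is the binary entropy function. *)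

theory Defs
  imports "HOL-Probability.Probability"
begin

text \<open>All logarithms are base 2.  Indices of variables are 1..n.\<close>

definition rho :: "nat \<Rightarrow> nat" where
  "rho n = nat \<lfloor>sqrt (real n) * log 2 (log 2 (real n))\<rfloor>"

definition kk :: "nat \<Rightarrow> nat" where
  "kk n = n choose (rho n)"

text \<open>V: pairs (T, y), T a rho-subset of [n], y : T -> A (extensional).\<close>
definition Vset :: "nat \<Rightarrow> 'a set \<Rightarrow> (nat set \<times> (nat \<Rightarrow> 'a)) set" where
  "Vset n A = {(T, y). T \<subseteq> {1..n} \<and> card T = rho n \<and> y \<in> T \<rightarrow>\<^sub>E A}"

definition kprime :: "real \<Rightarrow> nat \<Rightarrow> 'a set \<Rightarrow> real" where
  "kprime eps0 n A = real (kk n) *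
     real (card (Vset n A)) powr (- eps0 / log 2 (log 2 (real (card (Vset n A)))))"

definition shannon :: "'b pmf \<Rightarrow> real" where
  "shannon p = - (\<Sum>z\<in>set_pmf p. pmf p z * log 2 (pmf p z))"

definition cond_H :: "'v pmf \<Rightarrow> ('v \<Rightarrow> 'b) \<Rightarrow> ('v \<Rightarrow> 'c) \<Rightarrow> real" where
  "cond_H M Z W = (\<Sum>w\<in>set_pmf (map_pmf W M).
      pmf (map_pmf W M) w * shannon (map_pmf Z (cond_pmf M {v. W v = w})))"

definition bin_H :: "real \<Rightarrow> real" where
  "bin_H p = - p * log 2 p - (1 - p) * log 2 (1 - p)"

text \<open>Random variables on v = (T, y).  Y_i = None plays the role of the symbol bottom.\<close>
definition Xv :: "nat \<Rightarrow> nat set \<times> (nat \<Rightarrow> 'a) \<Rightarrow> nat" where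
  "Xv i v = (if i \<in> fst v then 1 else 0)"

definition Yv :: "nat \<Rightarrow> nat set \<times> (nat \<Rightarrow> 'a) \<Rightarrow> 'a option" where
  "Yv i v = (if i \<in> fst v then Some (snd v i) else None)"

definition prefXY :: "nat \<Rightarrow> nat set \<times> (nat \<Rightarrow> 'a) \<Rightarrow> (nat \<times> 'a option) list" where
  "prefXY i v = map (\<lambda>j. (Xv j v, Yv j v)) [1..<i]"

definition alpha :: "(nat set \<times> (nat \<Rightarrow> 'a)) set \<Rightarrow> nat \<Rightarrow> real" where
  "alpha S i = cond_H (pmf_of_set S) (Xv i) (prefXY i)"

definition beta :: "(nat set \<times> (nat \<Rightarrow> 'a)) set \<Rightarrow> nat \<Rightarrow> real" where
  "beta S i = cond_H (pmf_of_set S) (Yv i) (\<lambda>v. (Xv i v, prefXY i v))"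

definition qq :: "(nat set \<times> (nat \<Rightarrow> 'a)) set \<Rightarrow> nat \<Rightarrow> real" where
  "qq S i = measure_pmf.prob (pmf_of_set S) {v. Xv i v = 1}"

definition good :: "real \<Rightarrow> 'a set \<Rightarrow> (nat set \<times> (nat \<Rightarrow> 'a)) set \<Rightarrow> nat \<Rightarrow> bool" where
  "good eps1 A S i \<longleftrightarrow>
     alpha S i \<ge> bin_H (qq S i) - 2 * qq S i * log 2 (real (card A)) \<and>
     beta S i \<ge> eps1 / 2 * qq S i"

end

theory Submission
  imports Defs "HOL-Real_Asymp.Real_Asymp"
begin


definition cnt :: "'v set \<Rightarrow> ('v \<Rightarrow> 'b) \<Rightarrow> 'v \<Rightarrow> nat" where
  "cnt S W v = card {u\<in>S. W u = W v}"

definition ent :: "'v set \<Rightarrow> ('v \<Rightarrow> 'b) \<Rightarrow> real" where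
  "ent S W = (\<Sum>v\<in>S. log 2 (card S / cnt S W v)) / card S"

lemma cnt_pos: "finite S \<Longrightarrow> v \<in> S \<Longrightarrow> cnt S W v > 0"
  unfolding cnt_def by (subst card_gt_0_iff) auto

lemma cnt_le: "finite S \<Longrightarrow> cnt S W v \<le> card S"
  unfolding cnt_def by (rule card_mono) auto

lemma ent_cong:
  assumes "\<And>u v. u \<in> S \<Longrightarrow> v \<in> S \<Longrightarrow> (W u = W v) = (W' u = W' v)"
  shows "ent S W = ent S W'"
proof -
  have "cnt S W v = cnt S W' v" if "v \<in> S" for v
    unfolding cnt_def using assms that by (metis (no_types, lifting) mem_Collect_eq)
  then show ?thesis unfolding ent_def by (simp cong: sum.cong)
qed

lemma ent_const: "ent S (\<lambda>v. c) = 0"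
  unfolding ent_def cnt_def by simp

lemma ent_inj:
  assumes "finite S" "S \<noteq> {}" "inj_on W S"
  shows "ent S W = log 2 (card S)"
proof -
  have "cnt S W v = 1" if "v \<in> S" for v
  proof -
    have "{u\<in>S. W u = W v} = {v}" using assms(3) that by (auto dest: inj_onD)
    then show ?thesis unfolding cnt_def by simp
  qed
  then have "ent S W = (\<Sum>v\<in>S. log 2 (card S)) / card S"
    unfolding ent_def by simp
  also have "\<dots> = log 2 (card S)" using assms by simp
  finally show ?thesis .
qed

lemma sum_class:
  assumes "finite S"
  shows "(\<Sum>v\<in>S. f v) = (\<Sum>w\<in>W`S. \<Sum>v\<in>{v\<in>S. W v = w}. f v)"
  using sum.image_gen[OF assms] .

lemma shannon_uniform:
  assumes "finite S" "S \<noteq> {}"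
  shows "shannon (map_pmf Z (pmf_of_set S)) = ent S Z"
proof -
  let ?N = "real (card S)"
  have N: "?N > 0" using assms by (simp add: card_gt_0_iff)
  have pm: "pmf (map_pmf Z (pmf_of_set S)) z = card {v\<in>S. Z v = z} / ?N" for z
    using assms by (simp add: pmf_map measure_pmf_of_set Int_def vimage_def)
  have "shannon (map_pmf Z (pmf_of_set S)) =
      (\<Sum>z\<in>Z`S. card {v\<in>S. Z v = z} / ?N * log 2 (?N / card {v\<in>S. Z v = z}))"
  proof -
    have "- (card {v\<in>S. Z v = z} / ?N * log 2 (card {v\<in>S. Z v = z} / ?N))
        = card {v\<in>S. Z v = z} / ?N * log 2 (?N / card {v\<in>S. Z v = z})" if "z \<in> Z`S" for z
    proof -
      have "card {v\<in>S. Z v = z} > 0" using that assms by (subst card_gt_0_iff) auto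
      then show ?thesis using N by (simp add: log_divide algebra_simps)
    qed
    then show ?thesis unfolding shannon_def using assms
      by (simp add: pm sum_negf[symmetric] cong: sum.cong)
  qed
  also have "\<dots> = ent S Z"
  proof -
    have "(\<Sum>v\<in>S. log 2 (?N / cnt S Z v)) =
        (\<Sum>z\<in>Z`S. \<Sum>v\<in>{v\<in>S. Z v = z}. log 2 (?N / cnt S Z v))"
      by (rule sum_class[OF assms(1)])
    also have "\<dots> = (\<Sum>z\<in>Z`S. card {v\<in>S. Z v = z} * log 2 (?N / card {v\<in>S. Z v = z}))"
    proof (rule sum.cong[OF refl])
      fix z assume "z \<in> Z`S"
      have "(\<Sum>v\<in>{v\<in>S. Z v = z}. log 2 (?N / cnt S Z v)) =
           (\<Sum>v\<in>{v\<in>S. Z v = z}. log 2 (?N / card {v\<in>S. Z v = z}))"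
        by (rule sum.cong) (auto simp: cnt_def)
      then show "(\<Sum>v\<in>{v\<in>S. Z v = z}. log 2 (?N / cnt S Z v)) =
          card {v\<in>S. Z v = z} * log 2 (?N / card {v\<in>S. Z v = z})" by simp
    qed
    finally show ?thesis unfolding ent_def using N
      by (simp add: sum_divide_distrib)
  qed
  finally show ?thesis .
qed

lemma cond_pmf_uniform:
  assumes "finite S" "w \<in> W`S"
  shows "cond_pmf (pmf_of_set S) {v. W v = w} = pmf_of_set {v\<in>S. W v = w}"
proof -
  have ne: "S \<noteq> {}" using assms by auto
  have ne2: "{v\<in>S. W v = w} \<noteq> {}" using assms by auto
  have i: "set_pmf (pmf_of_set S) \<inter> {v. W v = w} \<noteq> {}" using assms ne by auto
  show ?thesis
  proof (rule pmf_eqI)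
    fix x
    show "pmf (cond_pmf (pmf_of_set S) {v. W v = w}) x = pmf (pmf_of_set {v\<in>S. W v = w}) x"
      using pmf_cond[OF i, of x] assms ne ne2
      by (auto simp: measure_pmf_of_set Int_def indicator_def card_gt_0_iff)
  qed
qed

lemma cond_H_uniform:
  assumes "finite S" "S \<noteq> {}"
  shows "cond_H (pmf_of_set S) Z W =
     (\<Sum>w\<in>W`S. card {v\<in>S. W v = w} / card S * ent {v\<in>S. W v = w} Z)"
proof -
  have pm: "pmf (map_pmf W (pmf_of_set S)) w = card {v\<in>S. W v = w} / card S" for w
    using assms by (simp add: pmf_map measure_pmf_of_set Int_def vimage_def)
  have "shannon (map_pmf Z (cond_pmf (pmf_of_set S) {v. W v = w})) = ent {v\<in>S. W v = w} Z"
    if "w \<in> W`S" for w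
  proof -
    have "{v\<in>S. W v = w} \<noteq> {}" using that by auto
    then show ?thesis using that assms by (simp add: cond_pmf_uniform shannon_uniform)
  qed
  then show ?thesis unfolding cond_H_def using assms
    by (simp add: pm cong: sum.cong)
qed




lemma log_div_split: "a > 0 \<Longrightarrow> b > 0 \<Longrightarrow> c > 0 \<Longrightarrow>
   log 2 (b / c) = log 2 (a / c) - log 2 (a / b)"
  by (simp add: log_divide)

lemma chain_rule:
  assumes "finite S" "S \<noteq> {}"
  shows "(\<Sum>w\<in>W`S. card {v\<in>S. W v = w} / card S * ent {v\<in>S. W v = w} Z)
       = ent S (\<lambda>v. (W v, Z v)) - ent S W"
proof -
  let ?N = "real (card S)"
  have N: "?N > 0" using assms by (simp add: card_gt_0_iff)
  have eq: "card {v\<in>S. W v = w} / ?N * ent {v\<in>S. W v = w} Z =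
     (\<Sum>v\<in>{v\<in>S. W v = w}. log 2 (?N / cnt S (\<lambda>v. (W v, Z v)) v) - log 2 (?N / cnt S W v)) / ?N"
    if w: "w \<in> W`S" for w
  proof -
    let ?Sw = "{v\<in>S. W v = w}"
    have fin: "finite ?Sw" using assms by simp
    have cpos: "card ?Sw > 0" using w assms by (subst card_gt_0_iff) auto
    have "card ?Sw / ?N * ent ?Sw Z = (\<Sum>v\<in>?Sw. log 2 (card ?Sw / cnt ?Sw Z v)) / ?N"
      unfolding ent_def using cpos by simp
    also have "\<dots> = (\<Sum>v\<in>?Sw. log 2 (?N / cnt S (\<lambda>v. (W v, Z v)) v) - log 2 (?N / cnt S W v)) / ?N"
    proof -
      have h: "log 2 (card ?Sw / cnt ?Sw Z v) =
          log 2 (?N / cnt S (\<lambda>v. (W v, Z v)) v) - log 2 (?N / cnt S W v)" if v: "v \<in> ?Sw" for v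
      proof -
        have c1: "cnt ?Sw Z v = cnt S (\<lambda>v. (W v, Z v)) v"
          unfolding cnt_def using v by (intro arg_cong[where f=card]) auto
        have c2: "card ?Sw = cnt S W v"
          unfolding cnt_def using v by (intro arg_cong[where f=card]) auto
        have p1: "cnt ?Sw Z v > 0" using cnt_pos[OF fin v] .
        show ?thesis unfolding c1[symmetric] c2 using p1 cpos N c2
          by (intro log_div_split) (auto simp: c1)
      qed
      have "(\<Sum>v\<in>?Sw. log 2 (card ?Sw / cnt ?Sw Z v)) = (\<Sum>v\<in>?Sw. log 2 (?N / cnt S (\<lambda>v. (W v, Z v)) v) - log 2 (?N / cnt S W v))"
        by (rule sum.cong[OF refl]) (rule h)
      then show ?thesis by simp
    qed
    finally show ?thesis .
  qed
  have "(\<Sum>w\<in>W`S. card {v\<in>S. W v = w} / card S * ent {v\<in>S. W v = w} Z) =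
     (\<Sum>w\<in>W`S. (\<Sum>v\<in>{v\<in>S. W v = w}. log 2 (?N / cnt S (\<lambda>v. (W v, Z v)) v) - log 2 (?N / cnt S W v)) / ?N)"
    by (rule sum.cong[OF refl]) (rule eq)
  also have "\<dots> = (\<Sum>v\<in>S. log 2 (?N / cnt S (\<lambda>v. (W v, Z v)) v) - log 2 (?N / cnt S W v)) / ?N"
    by (simp add: sum_divide_distrib[symmetric] sum_class[OF assms(1), symmetric])
  also have "\<dots> = ent S (\<lambda>v. (W v, Z v)) - ent S W"
    unfolding ent_def by (simp add: sum_subtractf diff_divide_distrib)
  finally show ?thesis .
qed

lemma ent_nonneg:
  assumes "finite S"
  shows "ent S W \<ge> 0"
proof -
  have "log 2 (card S / cnt S W v) \<ge> 0" if "v \<in> S" for v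
    using cnt_pos[OF assms that, of W] cnt_le[OF assms, of W v] by simp
  then show ?thesis unfolding ent_def by (simp add: sum_nonneg)
qed

lemma log2_le: "x > 0 \<Longrightarrow> log 2 x \<le> (x - 1) / ln 2"
  unfolding log_def using ln_le_minus_one[of x] by (simp add: divide_right_mono)

lemma ent_le_log_card:
  assumes "finite S" "S \<noteq> {}"
  shows "ent S Z \<le> log 2 (card (Z ` S))"
proof -
  let ?N = "real (card S)" let ?m = "real (card (Z`S))"
  have N: "?N > 0" using assms by (simp add: card_gt_0_iff)
  have m: "?m > 0" using assms by (simp add: card_gt_0_iff)
  have "(\<Sum>v\<in>S. log 2 (?N / cnt S Z v) - log 2 ?m) \<le> (\<Sum>v\<in>S. (?N / (cnt S Z v * ?m) - 1) / ln 2)"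
  proof (rule sum_mono)
    fix v assume v: "v \<in> S"
    have c: "real (cnt S Z v) > 0" using cnt_pos[OF assms(1) v] by simp
    have "log 2 (?N / cnt S Z v) - log 2 ?m = log 2 (?N / (cnt S Z v * ?m))"
      using N c m by (simp add: log_divide log_mult)
    also have "\<dots> \<le> (?N / (cnt S Z v * ?m) - 1) / ln 2"
      using N c m by (intro log2_le) simp
    finally show "log 2 (?N / cnt S Z v) - log 2 ?m \<le> (?N / (cnt S Z v * ?m) - 1) / ln 2" .
  qed
  also have "\<dots> = ((\<Sum>v\<in>S. ?N / (cnt S Z v * ?m)) - ?N) / ln 2"
    by (simp add: sum_divide_distrib[symmetric] sum_subtractf)
  also have "(\<Sum>v\<in>S. ?N / (cnt S Z v * ?m)) = ?N"
  proof -
    have "(\<Sum>v\<in>S. ?N / (cnt S Z v * ?m)) = (\<Sum>z\<in>Z`S. \<Sum>v\<in>{v\<in>S. Z v = z}. ?N / (cnt S Z v * ?m))"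
      by (rule sum_class[OF assms(1)])
    also have "\<dots> = (\<Sum>z\<in>Z`S. ?N / ?m)"
    proof (rule sum.cong[OF refl])
      fix z assume z: "z \<in> Z`S"
      have cz: "card {v\<in>S. Z v = z} > 0" using z assms by (subst card_gt_0_iff) auto
      have "(\<Sum>v\<in>{v\<in>S. Z v = z}. ?N / (cnt S Z v * ?m)) = (\<Sum>v\<in>{v\<in>S. Z v = z}. ?N / (card {v\<in>S. Z v = z} * ?m))"
        by (rule sum.cong) (auto simp: cnt_def)
      also have "\<dots> = ?N / ?m" using cz by simp
      finally show "(\<Sum>v\<in>{v\<in>S. Z v = z}. ?N / (cnt S Z v * ?m)) = ?N / ?m" .
    qed
    also have "\<dots> = ?N" using m by simp
    finally show ?thesis .
  qed
  finally have "(\<Sum>v\<in>S. log 2 (?N / cnt S Z v)) - ?N * log 2 ?m \<le> 0"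
    by (simp add: sum_subtractf)
  then show ?thesis unfolding ent_def using N by (simp add: divide_le_eq mult.commute)
qed

lemma subadd:
  assumes "finite S" "S \<noteq> {}"
  shows "ent S (\<lambda>v. (W v, Z v)) \<le> ent S W + ent S Z"
proof -
  let ?N = "real (card S)"
  let ?WZ = "\<lambda>v. (W v, Z v)"
  have N: "?N > 0" using assms by (simp add: card_gt_0_iff)
  have key: "log 2 (?N / cnt S W v) + log 2 (?N / cnt S Z v) - log 2 (?N / cnt S ?WZ v)
      \<ge> (1 - cnt S W v * cnt S Z v / (?N * cnt S ?WZ v)) / ln 2" if v: "v \<in> S" for v
  proof -
    have a: "real (cnt S W v) > 0" "real (cnt S Z v) > 0" "real (cnt S ?WZ v) > 0"
      using cnt_pos[OF assms(1) v] by auto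
    let ?x = "cnt S W v * cnt S Z v / (?N * cnt S ?WZ v)"
    have xp: "?x > 0" using a N by simp
    have "log 2 (?N / cnt S W v) + log 2 (?N / cnt S Z v) - log 2 (?N / cnt S ?WZ v) = - log 2 ?x"
      using a N by (simp add: log_divide log_mult)
    also have "- log 2 ?x \<ge> (1 - ?x) / ln 2"
    proof -
      have "(1 - ?x) / ln 2 = - ((?x - 1) / ln 2)" by (simp add: field_simps)
      then show ?thesis using log2_le[OF xp] by linarith
    qed
    finally show ?thesis by simp
  qed
  have sumeq: "(\<Sum>v\<in>S. cnt S W v * cnt S Z v / (?N * cnt S ?WZ v)) \<le> ?N"
  proof -
    have "(\<Sum>v\<in>S. cnt S W v * cnt S Z v / (?N * cnt S ?WZ v)) =
       (\<Sum>p\<in>?WZ`S. \<Sum>v\<in>{v\<in>S. ?WZ v = p}. cnt S W v * cnt S Z v / (?N * cnt S ?WZ v))"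
      by (rule sum_class[OF assms(1)])
    also have "\<dots> = (\<Sum>p\<in>?WZ`S. card {v\<in>S. W v = fst p} * card {v\<in>S. Z v = snd p} / ?N)"
    proof (rule sum.cong[OF refl])
      fix p assume p: "p \<in> ?WZ`S"
      have cp: "card {v\<in>S. ?WZ v = p} > 0" using p assms by (subst card_gt_0_iff) auto
      have "(\<Sum>v\<in>{v\<in>S. ?WZ v = p}. cnt S W v * cnt S Z v / (?N * cnt S ?WZ v)) =
        (\<Sum>v\<in>{v\<in>S. ?WZ v = p}. card {v\<in>S. W v = fst p} * card {v\<in>S. Z v = snd p} / (?N * card {v\<in>S. ?WZ v = p}))"
        by (rule sum.cong) (auto simp: cnt_def)
      also have "\<dots> = card {v\<in>S. W v = fst p} * card {v\<in>S. Z v = snd p} / ?N" using cp by simp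
      finally show "(\<Sum>v\<in>{v\<in>S. ?WZ v = p}. cnt S W v * cnt S Z v / (?N * cnt S ?WZ v)) =
         card {v\<in>S. W v = fst p} * card {v\<in>S. Z v = snd p} / ?N" .
    qed
    also have "\<dots> \<le> (\<Sum>p\<in>W`S \<times> Z`S. card {v\<in>S. W v = fst p} * card {v\<in>S. Z v = snd p} / ?N)"
      by (rule sum_mono2) (use assms in auto)
    also have "\<dots> = (\<Sum>w\<in>W`S. card {v\<in>S. W v = w}) * (\<Sum>z\<in>Z`S. card {v\<in>S. Z v = z}) / ?N"
      by (simp add: sum.cartesian_product' sum_product sum_divide_distrib)
    also have "\<dots> = ?N"
    proof -
      have cls: "(\<Sum>w\<in>U`S. real (card {v\<in>S. U v = w})) = ?N" for U :: "_ \<Rightarrow> 'x"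
        using sum_class[OF assms(1), of "\<lambda>_. 1::real" U] by simp
      show ?thesis using cls[of W] cls[of Z] N by simp
    qed
    finally show ?thesis .
  qed
  have "(\<Sum>v\<in>S. (1 - cnt S W v * cnt S Z v / (?N * cnt S ?WZ v)) / ln 2)
      \<le> (\<Sum>v\<in>S. log 2 (?N / cnt S W v) + log 2 (?N / cnt S Z v) - log 2 (?N / cnt S ?WZ v))"
    using key by (rule sum_mono)
  moreover have "(\<Sum>v\<in>S. (1 - cnt S W v * cnt S Z v / (?N * cnt S ?WZ v)) / ln 2) =
      (?N - (\<Sum>v\<in>S. cnt S W v * cnt S Z v / (?N * cnt S ?WZ v))) / ln 2"
    by (simp add: sum_divide_distrib[symmetric] sum_subtractf)
  moreover have "(?N - (\<Sum>v\<in>S. cnt S W v * cnt S Z v / (?N * cnt S ?WZ v))) / ln 2 \<ge> 0"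
    using sumeq by simp
  ultimately have "0 \<le> (\<Sum>v\<in>S. log 2 (?N / cnt S W v) + log 2 (?N / cnt S Z v) - log 2 (?N / cnt S ?WZ v))"
    by linarith
  then show ?thesis unfolding ent_def using N
    by (simp add: sum_subtractf sum.distrib divide_simps)
qed




lemma Vset_finite: "finite A \<Longrightarrow> finite (Vset n A)"
proof -
  assume fA: "finite A"
  have "Vset n A \<subseteq> (SIGMA T:Pow {1..n}. PiE T (\<lambda>_. A))"
    unfolding Vset_def by auto
  moreover have "finite (SIGMA T:Pow {1..n}. PiE T (\<lambda>_. A))"
    using fA by (intro finite_SigmaI finite_PiE) (auto intro: finite_subset)
  ultimately show ?thesis by (rule finite_subset)
qed

lemma prefXY_inj:
  assumes "S \<subseteq> Vset n A"
  shows "inj_on (prefXY (Suc n)) S"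
proof (rule inj_onI)
  fix u v assume u: "u \<in> S" and v: "v \<in> S" and eq: "prefXY (Suc n) u = prefXY (Suc n) v"
  obtain Tu yu where u': "u = (Tu, yu)" by (cases u)
  obtain Tv yv where v': "v = (Tv, yv)" by (cases v)
  have uV: "Tu \<subseteq> {1..n}" "yu \<in> Tu \<rightarrow>\<^sub>E A" using u assms u' unfolding Vset_def by auto
  have vV: "Tv \<subseteq> {1..n}" "yv \<in> Tv \<rightarrow>\<^sub>E A" using v assms v' unfolding Vset_def by auto
  have pt: "Xv j u = Xv j v \<and> Yv j u = Yv j v" if "j \<in> {1..n}" for j
  proof -
    have j: "j \<in> set [1..<Suc n]" using that by auto
    have "\<forall>x\<in>set [1..<Suc n]. (Xv x u, Yv x u) = (Xv x v, Yv x v)"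
      using eq unfolding prefXY_def map_eq_conv .
    then have "(Xv j u, Yv j u) = (Xv j v, Yv j v)" using j by (rule bspec)
    then show ?thesis by simp
  qed
  have T: "Tu = Tv"
  proof
    show "Tu \<subseteq> Tv"
    proof
      fix j assume j: "j \<in> Tu"
      have jn: "j \<in> {1..n}" using j uV(1) by blast
      have "Xv j u = 1" using j u' by (simp add: Xv_def)
      then have "Xv j v = 1" using pt[OF jn] by simp
      then show "j \<in> Tv" using v' by (simp add: Xv_def split: if_splits)
    qed
    show "Tv \<subseteq> Tu"
    proof
      fix j assume j: "j \<in> Tv"
      have jn: "j \<in> {1..n}" using j vV(1) by blast
      have "Xv j v = 1" using j v' by (simp add: Xv_def)
      then have "Xv j u = 1" using pt[OF jn] by simp
      then show "j \<in> Tu" using u' by (simp add: Xv_def split: if_splits)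
    qed
  qed
  have "yu = yv"
  proof
    fix j
    show "yu j = yv j"
    proof (cases "j \<in> Tu")
      case True
      have jn: "j \<in> {1..n}" using True uV(1) by blast
      have "Yv j u = Some (yu j)" using True u' by (simp add: Yv_def)
      moreover have "Yv j v = Some (yv j)" using True T v' by (simp add: Yv_def)
      ultimately show ?thesis using pt[OF jn] by simp
    next
      case False
      have "yu j = undefined" using False uV(2) by (simp add: PiE_def extensional_def)
      moreover have "yv j = undefined" using False T vV(2) by (simp add: PiE_def extensional_def)
      ultimately show ?thesis by simp
    qed
  qed
  then show "u = v" using u' v' T by simp
qed

context
  fixes S :: "(nat set \<times> (nat \<Rightarrow> 'a)) set"
  assumes fin: "finite S" and ne: "S \<noteq> {}"
begin

lemma alpha_eq: "alpha S i = ent S (\<lambda>v. (prefXY i v, Xv i v)) - ent S (prefXY i)"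
  unfolding alpha_def cond_H_uniform[OF fin ne] chain_rule[OF fin ne] by (rule refl)

lemma beta_eq: "beta S i = ent S (\<lambda>v. ((Xv i v, prefXY i v), Yv i v)) - ent S (\<lambda>v. (Xv i v, prefXY i v))"
  unfolding beta_def cond_H_uniform[OF fin ne] chain_rule[OF fin ne] by (rule refl)

lemma prefXY_Suc: "1 \<le> i \<Longrightarrow> prefXY (Suc i) v = prefXY i v @ [(Xv i v, Yv i v)]"
  unfolding prefXY_def by simp

lemma step: "1 \<le> i \<Longrightarrow> alpha S i + beta S i = ent S (prefXY (Suc i)) - ent S (prefXY i)"
proof -
  assume i: "1 \<le> i"
  have e1: "ent S (\<lambda>v. (Xv i v, prefXY i v)) = ent S (\<lambda>v. (prefXY i v, Xv i v))"
    by (rule ent_cong) auto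
  have e2: "ent S (\<lambda>v. ((Xv i v, prefXY i v), Yv i v)) = ent S (prefXY (Suc i))"
    by (rule ent_cong) (auto simp: prefXY_Suc[OF i])
  show ?thesis using alpha_eq beta_eq e1 e2 by simp
qed

lemma telescope: "(\<Sum>i=1..n. alpha S i + beta S i) = ent S (prefXY (Suc n)) - ent S (prefXY 1)"
proof -
  have "(\<Sum>i=1..n. alpha S i + beta S i) = (\<Sum>i=1..n. ent S (prefXY (Suc i)) - ent S (prefXY i))"
    by (rule sum.cong) (auto simp: step)
  also have "\<dots> = ent S (prefXY (Suc n)) - ent S (prefXY 1)"
    by (rule sum_Suc_diff) simp
  finally show ?thesis .
qed

lemma sum_alpha_beta:
  assumes "S \<subseteq> Vset n A"
  shows "(\<Sum>i=1..n. alpha S i + beta S i) = log 2 (card S)"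
proof -
  have "ent S (prefXY 1) = ent S (\<lambda>v. ([]::(nat \<times> 'a option) list))"
    by (rule ent_cong) (simp add: prefXY_def)
  then have "ent S (prefXY 1) = 0" using ent_const by metis
  moreover have "ent S (prefXY (Suc n)) = log 2 (card S)"
    by (rule ent_inj[OF fin ne prefXY_inj[OF assms]])
  ultimately show ?thesis using telescope by simp
qed

lemma qq_eq: "qq S i = card {v\<in>S. i \<in> fst v} / card S"
proof -
  have h: "S \<inter> {v. Xv i v = 1} = {v\<in>S. i \<in> fst v}" by (auto simp: Xv_def)
  show ?thesis unfolding qq_def measure_pmf_of_set[OF ne fin] h by (rule refl)
qed

end




lemma VsetD: "v \<in> Vset n A \<Longrightarrow> fst v \<subseteq> {1..n} \<and> card (fst v) = rho n \<and> snd v \<in> fst v \<rightarrow>\<^sub>E A"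
  by (cases v) (simp add: Vset_def)

lemma neg_xlogx: "0 \<le> c \<Longrightarrow> 0 < N \<Longrightarrow> -(c/N) * log 2 (c/N) = c/N * log 2 (N/c)"
  by (cases "c = 0") (simp_all add: log_divide algebra_simps)

lemma gibbs1:
  assumes "0 \<le> q" "0 < p"
  shows "- q * log 2 q \<le> - q * log 2 p + (p - q) / ln 2"
proof (cases "q = 0")
  case True then show ?thesis using assms by simp
next
  case False
  then have q: "q > 0" using assms by simp
  have "log 2 (p / q) \<le> (p / q - 1) / ln 2" using q assms by (intro log2_le) simp
  then have "q * log 2 (p / q) \<le> q * ((p / q - 1) / ln 2)" using q by (intro mult_left_mono) auto
  also have "\<dots> = (p - q) / ln 2" using q by (simp add: field_simps)
  finally show ?thesis using q assms by (simp add: log_divide algebra_simps)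
qed

lemma bin_H_le:
  assumes "0 \<le> q" "q \<le> 1" "0 < p" "p < 1"
  shows "bin_H q \<le> - q * log 2 p - (1 - q) * log 2 (1 - p)"
proof -
  have "1 - q \<ge> 0" "1 - p > 0" using assms by auto
  from gibbs1[OF assms(1,3)] gibbs1[OF this]
  have "- q * log 2 q \<le> - q * log 2 p + (p - q) / ln 2"
       "- (1 - q) * log 2 (1 - q) \<le> - (1 - q) * log 2 (1 - p) + ((1 - p) - (1 - q)) / ln 2" .
  moreover have "(p - q) / ln 2 + ((1 - p) - (1 - q)) / ln 2 = 0" by (simp add: field_simps)
  ultimately show ?thesis unfolding bin_H_def by linarith
qed

lemma ent_binary:
  assumes fin: "finite S" and ne: "S \<noteq> {}" and Z: "\<And>v. v \<in> S \<Longrightarrow> Z v \<in> {0, 1::nat}"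
  shows "ent S Z = bin_H (card {v\<in>S. Z v = 1} / card S)"
proof -
  let ?N = "real (card S)"
  let ?c = "\<lambda>y. real (card {v\<in>S. Z v = y})"
  have N: "?N > 0" using fin ne by (simp add: card_gt_0_iff)
  have "(\<Sum>v\<in>S. log 2 (?N / cnt S Z v)) = (\<Sum>y\<in>{0,1}. \<Sum>v\<in>{v\<in>S. Z v = y}. log 2 (?N / cnt S Z v))"
    by (rule sum.group[symmetric]) (use fin Z in force)+
  also have "\<dots> = (\<Sum>y\<in>{0,1::nat}. ?c y * log 2 (?N / ?c y))"
  proof (rule sum.cong[OF refl])
    fix y :: nat
    have "(\<Sum>v\<in>{v\<in>S. Z v = y}. log 2 (?N / cnt S Z v)) = (\<Sum>v\<in>{v\<in>S. Z v = y}. log 2 (?N / ?c y))"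
      by (rule sum.cong) (auto simp: cnt_def)
    then show "(\<Sum>v\<in>{v\<in>S. Z v = y}. log 2 (?N / cnt S Z v)) = ?c y * log 2 (?N / ?c y)" by simp
  qed
  finally have e: "ent S Z = ?c 0 / ?N * log 2 (?N / ?c 0) + ?c 1 / ?N * log 2 (?N / ?c 1)"
    unfolding ent_def by (simp add: add_divide_distrib)
  have "card S = card {v\<in>S. Z v = 0} + card {v\<in>S. Z v = 1}"
  proof -
    have "S = {v\<in>S. Z v = 0} \<union> {v\<in>S. Z v = 1}" using Z by auto
    then have "card S = card ({v\<in>S. Z v = 0} \<union> {v\<in>S. Z v = 1})" by simp
    also have "\<dots> = card {v\<in>S. Z v = 0} + card {v\<in>S. Z v = 1}"
      by (rule card_Un_disjoint) (use fin in auto)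
    finally show ?thesis .
  qed
  then have c0: "1 - ?c 1 / ?N = ?c 0 / ?N" using N by (simp add: field_simps)
  show ?thesis unfolding bin_H_def c0 using e neg_xlogx[OF _ N, of "?c 0"] neg_xlogx[OF _ N, of "?c 1"]
    by simp
qed

context
  fixes S :: "(nat set \<times> (nat \<Rightarrow> 'a)) set" and n :: nat and A :: "'a set"
  assumes fin: "finite S" and ne: "S \<noteq> {}" and SV: "S \<subseteq> Vset n A"
    and finA: "finite A" and neA: "A \<noteq> {}"
begin

lemma ent_X: "ent S (Xv i) = bin_H (qq S i)"
proof -
  have "ent S (Xv i) = bin_H (card {v\<in>S. Xv i v = 1} / card S)"
    by (rule ent_binary[OF fin ne]) (simp add: Xv_def)
  moreover have "{v\<in>S. Xv i v = 1} = {v\<in>S. i \<in> fst v}" by (auto simp: Xv_def)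
  ultimately show ?thesis using qq_eq[OF fin ne] by simp
qed

lemma alpha_le: "alpha S i \<le> bin_H (qq S i)"
  using alpha_eq[OF fin ne, of i] subadd[OF fin ne, of "prefXY i" "Xv i"] ent_X by simp

lemma alpha_le2: "alpha S i \<le> ent S (Xv i)"
  using alpha_eq[OF fin ne, of i] subadd[OF fin ne, of "prefXY i" "Xv i"] by simp

lemma qq_bounds: "0 \<le> qq S i" "qq S i \<le> 1"
  unfolding qq_def by auto

lemma beta_le: "beta S i \<le> qq S i * log 2 (card A)"
proof -
  let ?N = "real (card S)"
  let ?Q = "\<lambda>v. (Xv i v, prefXY i v)"
  let ?a = "log 2 (real (card A))"
  have N: "?N > 0" using fin ne by (simp add: card_gt_0_iff)
  have cA: "card A > 0" using finA neA by (simp add: card_gt_0_iff)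
  have a0: "?a \<ge> 0" using cA by simp
  have bw: "ent {v\<in>S. ?Q v = w} (Yv i) \<le> (if fst w = 1 then ?a else 0)" if w: "w \<in> ?Q`S" for w
  proof -
    let ?Sw = "{v\<in>S. ?Q v = w}"
    have fw: "finite ?Sw" "?Sw \<noteq> {}" using fin w by auto
    have le: "ent ?Sw (Yv i) \<le> log 2 (card (Yv i ` ?Sw))" by (rule ent_le_log_card[OF fw])
    have cpos: "card (Yv i ` ?Sw) > 0" using fw by (simp add: card_gt_0_iff)
    show ?thesis
    proof (cases "fst w = 1")
      case True
      have "Yv i ` ?Sw \<subseteq> Some ` A"
      proof
        fix y assume "y \<in> Yv i ` ?Sw"
        then obtain v where v: "v \<in> S" "?Q v = w" "y = Yv i v" by auto
        have "Xv i v = 1" using v True by auto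
        then have iT: "i \<in> fst v" by (simp add: Xv_def split: if_splits)
        have "snd v \<in> fst v \<rightarrow>\<^sub>E A" using VsetD SV v(1) by blast
        then have "snd v i \<in> A" using iT by auto
        then show "y \<in> Some ` A" using v(3) iT by (simp add: Yv_def)
      qed
      then have "card (Yv i ` ?Sw) \<le> card (Some ` A)" using finA by (intro card_mono) auto
      also have "\<dots> = card A" by (simp add: card_image)
      finally have "log 2 (card (Yv i ` ?Sw)) \<le> ?a" using cpos by simp
      then show ?thesis using le True by simp
    next
      case False
      have "Yv i ` ?Sw = {None}"
      proof -
        have "Yv i v = None" if "v \<in> ?Sw" for v
        proof -
          have "Xv i v \<noteq> 1" using that False by auto
          then show ?thesis by (simp add: Xv_def Yv_def split: if_splits)
        qed
        then show ?thesis using fw(2) by auto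
      qed
      then show ?thesis using le False by simp
    qed
  qed
  have "beta S i = (\<Sum>w\<in>?Q`S. card {v\<in>S. ?Q v = w} / ?N * ent {v\<in>S. ?Q v = w} (Yv i))"
    unfolding beta_def cond_H_uniform[OF fin ne] by (rule refl)
  also have "\<dots> \<le> (\<Sum>w\<in>?Q`S. card {v\<in>S. ?Q v = w} / ?N * (if fst w = 1 then ?a else 0))"
  proof (rule sum_mono)
    fix w assume w: "w \<in> ?Q`S"
    have "card {v\<in>S. ?Q v = w} / ?N \<ge> 0" using N by simp
    then show "card {v\<in>S. ?Q v = w} / ?N * ent {v\<in>S. ?Q v = w} (Yv i) \<le>
        card {v\<in>S. ?Q v = w} / ?N * (if fst w = 1 then ?a else 0)"
      using bw[OF w] by (rule mult_left_mono[rotated])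
  qed
  also have "\<dots> = ?a / ?N * (\<Sum>w\<in>?Q`S. if fst w = 1 then real (card {v\<in>S. ?Q v = w}) else 0)"
    by (simp add: sum_distrib_left if_distrib) (rule sum.cong, auto)
  also have "(\<Sum>w\<in>?Q`S. if fst w = 1 then real (card {v\<in>S. ?Q v = w}) else 0) =
     (\<Sum>v\<in>S. if i \<in> fst v then 1 else 0)"
  proof -
    have "(\<Sum>v\<in>S. if i \<in> fst v then 1 else 0) =
        (\<Sum>w\<in>?Q`S. \<Sum>v\<in>{v\<in>S. ?Q v = w}. (if i \<in> fst v then 1 else 0::real))"
      by (rule sum_class[OF fin])
    also have "\<dots> = (\<Sum>w\<in>?Q`S. if fst w = 1 then real (card {v\<in>S. ?Q v = w}) else 0)"
    proof (rule sum.cong[OF refl])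
      fix w assume "w \<in> ?Q`S"
      have "(\<Sum>v\<in>{v\<in>S. ?Q v = w}. (if i \<in> fst v then 1 else 0::real)) =
           (\<Sum>v\<in>{v\<in>S. ?Q v = w}. (if fst w = 1 then 1 else 0::real))"
        by (rule sum.cong) (auto simp: Xv_def)
      then show "(\<Sum>v\<in>{v\<in>S. ?Q v = w}. (if i \<in> fst v then 1 else 0::real)) =
           (if fst w = 1 then real (card {v\<in>S. ?Q v = w}) else 0)" by simp
    qed
    finally show ?thesis by simp
  qed
  also have "(\<Sum>v\<in>S. if i \<in> fst v then 1 else 0::real) = card {v\<in>S. i \<in> fst v}"
    using fin by (simp add: sum.inter_filter[symmetric])
  finally show ?thesis using qq_eq[OF fin ne, of i] by (simp add: mult.commute)
qed

lemma sum_qq: "(\<Sum>i=1..n. qq S i) = real (rho n)"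
proof -
  let ?N = "real (card S)"
  have N: "?N > 0" using fin ne by (simp add: card_gt_0_iff)
  have "(\<Sum>i=1..n. real (card {v\<in>S. i \<in> fst v})) = (\<Sum>i=1..n. \<Sum>v\<in>S. if i \<in> fst v then 1 else 0::real)"
    using fin by (simp add: sum.inter_filter[symmetric])
  also have "\<dots> = (\<Sum>v\<in>S. \<Sum>i=1..n. if i \<in> fst v then 1 else 0::real)"
    by (rule sum.swap)
  also have "\<dots> = (\<Sum>v\<in>S. real (rho n))"
  proof (rule sum.cong[OF refl])
    fix v assume v: "v \<in> S"
    have T: "fst v \<subseteq> {1..n}" "card (fst v) = rho n" using VsetD SV v by blast+
    have "(\<Sum>i=1..n. if i \<in> fst v then 1 else 0::real) = card {i\<in>{1..n}. i \<in> fst v}"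
      by (simp add: sum.inter_filter[symmetric])
    also have "{i\<in>{1..n}. i \<in> fst v} = fst v" using T by auto
    finally show "(\<Sum>i=1..n. if i \<in> fst v then 1 else 0::real) = real (rho n)" using T by simp
  qed
  finally have "(\<Sum>i=1..n. real (card {v\<in>S. i \<in> fst v})) = ?N * rho n" by simp
  then show ?thesis using qq_eq[OF fin ne] N by (simp add: sum_divide_distrib[symmetric])
qed

end




lemma card_Vset:
  assumes "finite A"
  shows "card (Vset n A) = kk n * card A ^ rho n"
proof -
  have eq: "Vset n A = (SIGMA T:{T. T \<subseteq> {1..n} \<and> card T = rho n}. PiE T (\<lambda>_. A))"
    unfolding Vset_def by auto
  have fin: "finite {T. T \<subseteq> {1..n} \<and> card T = rho n}" by simp
  have "card (Vset n A) = (\<Sum>T\<in>{T. T \<subseteq> {1..n} \<and> card T = rho n}. card (PiE T (\<lambda>_. A)))"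
    unfolding eq using fin assms
    by (intro card_SigmaI) (auto intro: finite_PiE finite_subset)
  also have "\<dots> = (\<Sum>T\<in>{T. T \<subseteq> {1..n} \<and> card T = rho n}. card A ^ rho n)"
  proof (rule sum.cong[OF refl])
    fix T assume T: "T \<in> {T. T \<subseteq> {1..n} \<and> card T = rho n}"
    then have "finite T" by (auto intro: finite_subset)
    then show "card (PiE T (\<lambda>_. A)) = card A ^ rho n" using T by (simp add: card_PiE)
  qed
  also have "\<dots> = kk n * card A ^ rho n"
    using n_subsets[of "{1..n}" "rho n"] by (simp add: kk_def)
  finally show ?thesis .
qed

lemma pow_fact: "m ^ r * fact m \<le> (fact (m + r) :: nat)"
proof (induction r)
  case 0 then show ?case by simp
next
  case (Suc r)
  have "m ^ Suc r * fact m = m * (m ^ r * fact m)" by simp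
  also have "\<dots> \<le> m * fact (m + r)" using Suc by simp
  also have "\<dots> \<le> Suc (m + r) * fact (m + r)" by (intro mult_right_mono) auto
  also have "\<dots> = fact (m + Suc r)" by simp
  finally show ?case .
qed

lemma binom_lower:
  assumes "r \<le> n"
  shows "real (n - r) ^ r \<le> real (n choose r) * fact r"
proof -
  have "(n - r) ^ r * fact (n - r) \<le> fact (n - r + r)" by (rule pow_fact)
  also have "\<dots> = fact n" using assms by simp
  also have "\<dots> = fact r * fact (n - r) * (n choose r)" using binomial_fact_lemma[OF assms] by simp
  finally have "(n - r) ^ r * fact (n - r) \<le> (n choose r) * fact r * fact (n - r)" by (simp add: ac_simps)
  then have "(n - r) ^ r \<le> (n choose r) * fact r" by simp
  then have "real ((n - r) ^ r) \<le> real ((n choose r) * fact r)" by (simp only: of_nat_le_iff)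
  then show ?thesis by simp
qed

lemma ln_fact_le:
  assumes "r \<ge> 1"
  shows "ln (fact r) \<le> (real r + 1) * ln (real r) - real r + 1"
  using assms
proof (induction r rule: dec_induct)
  case base then show ?case by simp
next
  case (step r)
  have r: "real r \<ge> 1" using step by simp
  have key: "1 \<le> (real r + 1) * (ln (real r + 1) - ln (real r))"
  proof -
    have x: "(real r + 1) / real r > 0" using r by simp
    have "ln ((real r + 1) / real r) \<ge> 1 - 1 / ((real r + 1) / real r)"
      using ln_le_minus_one[of "real r / (real r + 1)"] r by (simp add: ln_div)
    moreover have "1 - 1 / ((real r + 1) / real r) = 1 / (real r + 1)" using r by (simp add: field_simps)
    ultimately have "ln ((real r + 1) / real r) \<ge> 1 / (real r + 1)" by simp
    then have "(real r + 1) * ln ((real r + 1) / real r) \<ge> 1" using r by (simp add: field_simps)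
    then show ?thesis using r by (simp add: ln_div)
  qed
  have "ln (fact (Suc r) :: real) = ln (real r + 1) + ln (fact r)"
    by (simp add: ln_mult add.commute)
  also have "\<dots> \<le> ln (real r + 1) + ((real r + 1) * ln (real r) - real r + 1)" using step by simp
  also have "\<dots> \<le> (real (Suc r) + 1) * ln (real (Suc r)) - real (Suc r) + 1"
    using key by (simp add: algebra_simps)
  finally show ?case .
qed




lemma log2_le': "x > 0 \<Longrightarrow> log 2 x \<le> (x - 1) / ln 2"
  unfolding log_def using ln_le_minus_one[of x] by (simp add: divide_right_mono)

lemma ineq_det:
  fixes n :: nat and a eps1 :: real
  defines "s \<equiv> sqrt (real n)" and "l \<equiv> log 2 (real n)"
  defines "L2 \<equiv> log 2 l" and "lll \<equiv> log 2 (log 2 l)"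
  defines "r \<equiv> rho n" and "p \<equiv> real (rho n) / real n"
  assumes H1: "L2 \<ge> 2" and H2: "5 * lll \<le> (1/20) * l" and H3: "l / 2 - lll \<ge> 1"
    and H4: "s * L2 \<le> real n / 2" and H5: "3 * L2^2 + l + 2 \<le> (3/5) * eps1 * s"
    and H6: "(2/5) * a \<le> (1/20) * l" and H7: "real n \<ge> 16" and a0: "a \<ge> 0" and e1: "eps1 > 0"
  shows "1 \<le> r" "real r \<le> real n / 2" "0 < p" "p < 1"
    "log 2 (real (kk n)) \<ge> s" "kk n > 0"
    "5 * eps1 * log 2 (real (kk n)) / l
     - ((- real r * log 2 p - real (n - r) * log 2 (1 - p)) - log 2 (real (kk n)))
     - (eps1 / 5) * (log 2 (real (kk n)) + r * a) / log 2 (log 2 (real (kk n)) + r * a)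
     \<ge> (7/5) * eps1 * r"
proof -
  have n0: "real n > 0" using H7 by simp
  have s4: "s \<ge> 4" unfolding s_def using H7 real_sqrt_le_mono[of 16 "real n"] by simp
  have l4: "l \<ge> 4"
  proof -
    have "log 2 16 \<le> l" unfolding l_def using H7 by simp
    moreover have "log 2 (16::real) = 4"
      by (simp add: log_nat_power[of 2 2 4, simplified] )
    ultimately show ?thesis by simp
  qed
  have ls: "log 2 s = l / 2"
    unfolding s_def l_def using n0 by (simp add: powr_half_sqrt[symmetric] log_powr)
  have sL0: "s * L2 \<ge> 0" using s4 H1 by simp
  have r_le: "real r \<le> s * L2" unfolding r_def rho_def s_def L2_def l_def
    using sL0[unfolded s_def L2_def l_def] by simp
  have r_ge: "real r \<ge> s * L2 - 1" unfolding r_def rho_def s_def L2_def l_def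
    using sL0[unfolded s_def L2_def l_def] by linarith
  have "s * 2 \<le> s * L2" using H1 s4 by (intro mult_left_mono) auto
  then have rs: "real r \<ge> s" using r_ge s4 by linarith
  have r1: "real r \<ge> 1" using rs s4 by simp
  then show "1 \<le> r" by simp
  have rn2: "real r \<le> real n / 2" using r_le H4 by simp
  then show "real r \<le> real n / 2" .
  have rn: "r \<le> n" using rn2 n0 by simp
  have r0: "real r > 0" using r1 by simp
  show p0: "0 < p" unfolding p_def r_def[symmetric] using r0 n0 by simp
  have p2: "p \<le> 1/2" unfolding p_def r_def[symmetric] using rn2 n0 by (simp add: field_simps)
  then show p1: "p < 1" by simp
  have L2pos: "L2 > 0" using H1 by simp
  have lr: "log 2 r \<le> l / 2 + lll"
  proof -
    have "log 2 r \<le> log 2 (s * L2)" using r0 r_le by simp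
    also have "\<dots> = log 2 s + log 2 L2" using s4 L2pos by (simp add: log_mult)
    finally show ?thesis using ls unfolding lll_def L2_def by simp
  qed
  have kpos: "kk n > 0" unfolding kk_def r_def[symmetric] using rn by simp
  then show "kk n > 0" .
  have k0: "real (kk n) > 0" using kpos by simp
  have klow: "log 2 (kk n) \<ge> r * (l - log 2 r)"
  proof -
    have "(real n / real r) ^ r \<le> real (kk n)"
      unfolding kk_def r_def using binomial_ge_n_over_k_pow_k[OF rn[unfolded r_def]] by simp
    then have "log 2 ((real n / real r) ^ r) \<le> log 2 (kk n)"
      using r0 n0 kpos by (subst log_le_cancel_iff) auto
    moreover have "log 2 ((real n / real r) ^ r) = r * (l - log 2 r)"
      using r0 n0 by (simp add: log_nat_power log_divide l_def)
    ultimately show ?thesis by simp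
  qed
  have kup: "log 2 (kk n) \<le> r * l"
  proof -
    have "kk n \<le> n ^ r" unfolding kk_def r_def by (rule binomial_le_pow) (use rn r_def in simp)
    then have "real (kk n) \<le> real n ^ r" by (metis of_nat_le_iff of_nat_power)
    then have "log 2 (kk n) \<le> log 2 (real n ^ r)" using k0 n0 by (subst log_le_cancel_iff) auto
    also have "\<dots> = r * l" using n0 by (simp add: log_nat_power l_def)
    finally show ?thesis .
  qed
  have klow2: "log 2 (kk n) \<ge> r * (l / 2 - lll)"
  proof -
    have "r * (l / 2 - lll) \<le> r * (l - log 2 r)" using lr r0 by (intro mult_left_mono) auto
    then show ?thesis using klow by linarith
  qed
  have krs: "log 2 (kk n) \<ge> r"
  proof -
    have "real r * 1 \<le> real r * (l / 2 - lll)" using H3 r0 by (intro mult_left_mono) auto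
    then show ?thesis using klow2 by linarith
  qed
  then show "log 2 (real (kk n)) \<ge> s" using rs by simp
  define V where "V = log 2 (real (kk n)) + r * a"
  have "real r * a \<ge> 0" using a0 r0 by simp
  then have Vs: "V \<ge> s" unfolding V_def using krs rs by linarith
  have Vup: "V \<le> r * (l + a)" unfolding V_def using kup by (simp add: algebra_simps)
  have "log 2 s \<le> log 2 V" using Vs s4 by (subst log_le_cancel_iff) auto
  then have lV: "log 2 V \<ge> l / 2" using ls by simp
  have Vterm: "(eps1 / 5) * V / log 2 V \<le> eps1 * r * (9/20)"
  proof -
    have "V / log 2 V \<le> r * (l + a) / (l / 2)"
      using Vup lV l4 Vs s4 by (intro frac_le) auto
    also have "\<dots> = r * (2 + 2 * a / l)" using l4 by (simp add: field_simps)
    also have "\<dots> \<le> r * (9/4)"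
    proof -
      have "a / l \<le> 1/8" using H6 l4 by (simp add: field_simps)
      moreover have "2 * a / l = 2 * (a / l)" by simp
      ultimately have "2 + 2 * a / l \<le> 9/4" by linarith
      then show ?thesis using r0 by (intro mult_left_mono) auto
    qed
    finally have "V / log 2 V \<le> r * (9/4)" .
    then have "(eps1 / 5) * (V / log 2 V) \<le> (eps1 / 5) * (r * (9/4))" using e1 by (intro mult_left_mono) auto
    then show ?thesis by simp
  qed
  have Kterm: "5 * eps1 * log 2 (real (kk n)) / l \<ge> (49/20) * eps1 * r"
  proof -
    have "5 * log 2 (real (kk n)) / l \<ge> 5 * (r * (l / 2 - lll)) / l"
      using klow2 l4 by (intro divide_right_mono) auto
    moreover have "5 * (r * (l / 2 - lll)) / l = r * ((5/2) - 5 * lll / l)" using l4 by (simp add: field_simps)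
    moreover have "5 * lll / l \<le> (1/20)" using H2 l4 by (simp add: field_simps)
    moreover have "r * ((5/2) - 5 * lll / l) \<ge> r * (49/20)"
      using \<open>5 * lll / l \<le> (1/20)\<close> r0 by (intro mult_left_mono) auto
    ultimately have "5 * log 2 (real (kk n)) / l \<ge> r * (49/20)" by linarith
    then have "eps1 * (5 * log 2 (real (kk n)) / l) \<ge> eps1 * (r * (49/20))" using e1 by (intro mult_left_mono) auto
    then show ?thesis by simp
  qed
  have ln2: "ln 2 \<ge> (2/3::real)" by (rule ln2_ge_two_thirds)
  have Hgap: "(- real r * log 2 p - real (n - r) * log 2 (1 - p)) - log 2 (real (kk n)) \<le> 3 * L2^2 + l + 2"
  proof -
    have nr: "real (n - r) = real n - real r" using rn by simp
    have nr0: "real n - real r > 0" using rn2 r0 by simp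
    have t1: "- real r * log 2 p = r * (l - log 2 r)"
      unfolding p_def r_def[symmetric] using r0 n0 by (simp add: log_divide l_def algebra_simps)
    have t2: "- real (n - r) * log 2 (1 - p) \<le> r / ln 2"
    proof -
      have q: "1 - p > 0" using p1 by simp
      have "log 2 (1 / (1 - p)) \<le> (1 / (1 - p) - 1) / ln 2" using q by (intro log2_le') simp
      moreover have "log 2 (1 / (1 - p)) = - log 2 (1 - p)" using q by (simp add: log_divide)
      moreover have "1 / (1 - p) - 1 = p / (1 - p)" using q by (simp add: field_simps)
      ultimately have "- log 2 (1 - p) \<le> p / (1 - p) / ln 2" by simp
      then have "(real n - real r) * (- log 2 (1 - p)) \<le> (real n - real r) * (p / (1 - p) / ln 2)"
        using nr0 by (intro mult_left_mono) auto
      moreover have "(real n - real r) * (p / (1 - p)) = r"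
        unfolding p_def r_def[symmetric] using n0 nr0 by (simp add: field_simps)
      ultimately have "(real n - real r) * (- log 2 (1 - p)) \<le> r / ln 2"
        by (metis times_divide_eq_right)
      moreover have "- real (n - r) * log 2 (1 - p) = (real n - real r) * (- log 2 (1 - p))"
        using nr by (simp add: algebra_simps)
      ultimately show ?thesis by linarith
    qed
    have t3: "log 2 (kk n) \<ge> r * log 2 (real n - real r) - (real r + 1) * log 2 r + (real r - 1) / ln 2"
    proof -
      have b: "(real n - real r) ^ r \<le> real (kk n) * fact r"
        using binom_lower[OF rn] nr unfolding kk_def r_def by simp
      have f0: "(fact r :: real) > 0" by simp
      have "log 2 ((real n - real r) ^ r) \<le> log 2 (real (kk n) * fact r)"
        using b nr0 k0 by (subst log_le_cancel_iff) auto
      then have "r * log 2 (real n - real r) \<le> log 2 (kk n) + log 2 (fact r)"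
        using nr0 k0 f0 by (simp add: log_nat_power log_mult)
      moreover have "log 2 (fact r) \<le> (real r + 1) * log 2 r - (real r - 1) / ln 2"
      proof -
        have "ln (fact r) \<le> (real r + 1) * ln (real r) - real r + 1"
          using ln_fact_le r1 by simp
        then have "ln (fact r) / ln 2 \<le> ((real r + 1) * ln (real r) - real r + 1) / ln 2"
          by (intro divide_right_mono) auto
        then show ?thesis by (simp add: log_def diff_divide_distrib add_divide_distrib)
      qed
      ultimately show ?thesis by simp
    qed
    have t4: "r * (l - log 2 (real n - real r)) \<le> 2 * L2^2 / ln 2"
    proof -
      have "l - log 2 (real n - real r) = log 2 (real n / (real n - real r))"
        using n0 nr0 by (simp add: log_divide l_def)
      also have "\<dots> \<le> (real n / (real n - real r) - 1) / ln 2" using n0 nr0 by (intro log2_le') simp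
      also have "real n / (real n - real r) - 1 = r / (real n - real r)" using nr0 by (simp add: field_simps)
      also have "r / (real n - real r) \<le> 2 * r / n" using nr0 rn2 n0 r0 by (simp add: field_simps)
      finally have "l - log 2 (real n - real r) \<le> 2 * r / n / ln 2" by (simp add: divide_right_mono)
      then have "r * (l - log 2 (real n - real r)) \<le> r * (2 * r / n / ln 2)" using r0 by (intro mult_left_mono) auto
      also have "\<dots> = 2 * (r^2 / n) / ln 2" by (simp add: power2_eq_square)
      also have "r^2 / n \<le> L2^2"
      proof -
        have "real r ^ 2 \<le> (s * L2)^2" using r_le r0 by (intro power_mono) auto
        also have "\<dots> = n * L2^2" unfolding s_def by (simp add: power_mult_distrib)
        finally show ?thesis using n0 by (simp add: field_simps)
      qed
      finally show ?thesis by (simp add: divide_right_mono)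
    qed
    have t5: "2 * L2^2 / ln 2 \<le> 3 * L2^2"
    proof -
      have "2 / ln 2 \<le> (3::real)" using ln2 by (simp add: field_simps)
      then have "2 / ln 2 * L2^2 \<le> 3 * L2^2" by (intro mult_right_mono) auto
      then show ?thesis by simp
    qed
    have t6: "log 2 r \<le> l" unfolding l_def using r0 rn by simp
    have t7: "1 / ln 2 \<le> (2::real)" using ln2 by (simp add: field_simps)
    have "(- real r * log 2 p - real (n - r) * log 2 (1 - p)) - log 2 (real (kk n))
       \<le> r * (l - log 2 r) + r / ln 2 - (r * log 2 (real n - real r) - (real r + 1) * log 2 r + (real r - 1) / ln 2)"
      using t1 t2 t3 by linarith
    also have "\<dots> = r * (l - log 2 (real n - real r)) + log 2 r + 1 / ln 2"
      by (simp add: algebra_simps diff_divide_distrib add_divide_distrib)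
    finally show ?thesis using t4 t5 t6 t7 by linarith
  qed
  show "5 * eps1 * log 2 (real (kk n)) / l
     - ((- real r * log 2 p - real (n - r) * log 2 (1 - p)) - log 2 (real (kk n)))
     - (eps1 / 5) * (log 2 (real (kk n)) + r * a) / log 2 (log 2 (real (kk n)) + r * a)
     \<ge> (7/5) * eps1 * r"
  proof -
    have "eps1 * s \<le> eps1 * r" using rs e1 by (intro mult_left_mono) auto
    moreover have "(3/5) * eps1 * s = (3/5) * (eps1 * s)" "(7/5) * eps1 * r = (7/5) * (eps1 * r)"
      "(49/20) * eps1 * r = (49/20) * (eps1 * r)" "eps1 * r * (9/20) = (9/20) * (eps1 * r)" by simp_all
    ultimately show ?thesis using Kterm Hgap Vterm[unfolded V_def] H5 by linarith
  qed
qed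




lemma asym:
  fixes a eps1 :: real
  assumes e1: "eps1 > 0"
  shows "\<exists>N0::nat. \<forall>n\<ge>N0.
     log 2 (log 2 (real n)) \<ge> 2 \<and>
     5 * log 2 (log 2 (log 2 (real n))) \<le> (1/20) * log 2 (real n) \<and>
     log 2 (real n) / 2 - log 2 (log 2 (log 2 (real n))) \<ge> 1 \<and>
     sqrt (real n) * log 2 (log 2 (real n)) \<le> real n / 2 \<and>
     3 * (log 2 (log 2 (real n)))^2 + log 2 (real n) + 2 \<le> (3/5) * eps1 * sqrt (real n) \<and>
     (2/5) * a \<le> (1/20) * log 2 (real n) \<and>
     real n \<ge> 16"
proof -
  have F1: "eventually (\<lambda>x::real. log 2 (log 2 x) \<ge> 2) at_top" by real_asymp
  have F2: "eventually (\<lambda>x::real. 5 * log 2 (log 2 (log 2 x)) \<le> (1/20) * log 2 x) at_top" by real_asymp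
  have F3: "eventually (\<lambda>x::real. log 2 x / 2 - log 2 (log 2 (log 2 x)) \<ge> 1) at_top" by real_asymp
  have F4: "eventually (\<lambda>x::real. sqrt x * log 2 (log 2 x) \<le> x / 2) at_top" by real_asymp
  have F5: "((\<lambda>x::real. (3 * (log 2 (log 2 x))^2 + log 2 x + 2) / sqrt x) \<longlongrightarrow> 0) at_top" by real_asymp
  have F5': "eventually (\<lambda>x::real. (3 * (log 2 (log 2 x))^2 + log 2 x + 2) / sqrt x < (3/5) * eps1) at_top"
    by (rule order_tendstoD(2)[OF F5]) (use e1 in simp)
  have F5'': "eventually (\<lambda>x::real. sqrt x > 0) at_top" by real_asymp
  have F5''': "eventually (\<lambda>x::real. 3 * (log 2 (log 2 x))^2 + log 2 x + 2 \<le> (3/5) * eps1 * sqrt x) at_top"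
    using F5' F5''
  proof eventually_elim
    case (elim x)
    then show ?case by (simp add: divide_less_eq)
  qed
  have F6: "filterlim (\<lambda>x::real. log 2 x) at_top at_top" by real_asymp
  have F6': "eventually (\<lambda>x::real. 8 * a \<le> log 2 x) at_top"
    using F6 by (simp add: filterlim_at_top)
  have F7: "eventually (\<lambda>x::real. x \<ge> 16) at_top" by real_asymp
  have "eventually (\<lambda>x::real. log 2 (log 2 x) \<ge> 2 \<and>
     5 * log 2 (log 2 (log 2 x)) \<le> (1/20) * log 2 x \<and>
     log 2 x / 2 - log 2 (log 2 (log 2 x)) \<ge> 1 \<and>
     sqrt x * log 2 (log 2 x) \<le> x / 2 \<and>
     3 * (log 2 (log 2 x))^2 + log 2 x + 2 \<le> (3/5) * eps1 * sqrt x \<and>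
     (2/5) * a \<le> (1/20) * log 2 x \<and> x \<ge> 16) at_top"
    using F1 F2 F3 F4 F5''' F6' F7 by eventually_elim auto
  then obtain X where X: "\<And>x. x \<ge> X \<Longrightarrow> log 2 (log 2 x) \<ge> 2 \<and>
     5 * log 2 (log 2 (log 2 x)) \<le> (1/20) * log 2 x \<and>
     log 2 x / 2 - log 2 (log 2 (log 2 x)) \<ge> 1 \<and>
     sqrt x * log 2 (log 2 x) \<le> x / 2 \<and>
     3 * (log 2 (log 2 x))^2 + log 2 x + 2 \<le> (3/5) * eps1 * sqrt x \<and>
     (2/5) * a \<le> (1/20) * log 2 x \<and> x \<ge> 16"
    unfolding eventually_at_top_linorder by blast
  show ?thesis
  proof (intro exI allI impI)
    fix n :: nat assume "n \<ge> nat \<lceil>X\<rceil>"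
    then have "real n \<ge> X" by linarith
    then show "log 2 (log 2 (real n)) \<ge> 2 \<and>
     5 * log 2 (log 2 (log 2 (real n))) \<le> (1/20) * log 2 (real n) \<and>
     log 2 (real n) / 2 - log 2 (log 2 (log 2 (real n))) \<ge> 1 \<and>
     sqrt (real n) * log 2 (log 2 (real n)) \<le> real n / 2 \<and>
     3 * (log 2 (log 2 (real n)))^2 + log 2 (real n) + 2 \<le> (3/5) * eps1 * sqrt (real n) \<and>
     (2/5) * a \<le> (1/20) * log 2 (real n) \<and>
     real n \<ge> 16" by (rule X)
  qed
qed


theorem mainTheorem3:
  fixes eps1 eps0 :: real and A :: "'a set"
  assumes "eps1 > 0" and "0 < eps0" and "eps0 \<le> eps1 / 5"
    and "finite A" and "A \<noteq> {}"
  shows "\<exists>N::nat. \<forall>n\<ge>N. \<forall>S.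
     S \<subseteq> Vset n A \<and> real (card S) \<ge> kprime eps0 n A \<and>
     (\<Sum>i=1..n. beta S i) > 5 * eps1 * log 2 (real (kk n)) / log 2 (real n)
     \<longrightarrow> (\<Sum>i\<in>{i\<in>{1..n}. good eps1 A S i}. (qq S i)\<^sup>2)
          \<ge> (eps1 * real (rho n) / 5)\<^sup>2 / (real n * (log 2 (real (card A)))\<^sup>2)"
proof -
  note e1 = assms(1) and e0 = assms(2) and e01 = assms(3) and finA = assms(4) and neA = assms(5)
  define a where "a = log 2 (real (card A))"
  have cA: "card A \<ge> 1" using finA neA by (simp add: Suc_le_eq card_gt_0_iff)
  have a0: "a \<ge> 0" unfolding a_def using cA by simp
  obtain N0 where N0: "\<forall>n\<ge>N0.
     log 2 (log 2 (real n)) \<ge> 2 \<and>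
     5 * log 2 (log 2 (log 2 (real n))) \<le> (1/20) * log 2 (real n) \<and>
     log 2 (real n) / 2 - log 2 (log 2 (log 2 (real n))) \<ge> 1 \<and>
     sqrt (real n) * log 2 (log 2 (real n)) \<le> real n / 2 \<and>
     3 * (log 2 (log 2 (real n)))^2 + log 2 (real n) + 2 \<le> (3/5) * eps1 * sqrt (real n) \<and>
     (2/5) * a \<le> (1/20) * log 2 (real n) \<and>
     real n \<ge> 16"
    using asym[OF e1, of a] by blast
  show ?thesis
  proof (rule exI[of _ N0], intro allI impI)
    fix n S
    assume n: "n \<ge> N0" and hyp: "S \<subseteq> Vset n A \<and> real (card S) \<ge> kprime eps0 n A \<and>
     (\<Sum>i=1..n. beta S i) > 5 * eps1 * log 2 (real (kk n)) / log 2 (real n)"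
    have SV: "S \<subseteq> Vset n A" and cS: "real (card S) \<ge> kprime eps0 n A"
      and hb: "(\<Sum>i=1..n. beta S i) > 5 * eps1 * log 2 (real (kk n)) / log 2 (real n)"
      using hyp by auto
    have H: "log 2 (log 2 (real n)) \<ge> 2"
     "5 * log 2 (log 2 (log 2 (real n))) \<le> (1/20) * log 2 (real n)"
     "log 2 (real n) / 2 - log 2 (log 2 (log 2 (real n))) \<ge> 1"
     "sqrt (real n) * log 2 (log 2 (real n)) \<le> real n / 2"
     "3 * (log 2 (log 2 (real n)))^2 + log 2 (real n) + 2 \<le> (3/5) * eps1 * sqrt (real n)"
     "(2/5) * a \<le> (1/20) * log 2 (real n)"
     "real n \<ge> 16"
      using N0 n by blast+
    note D = ineq_det[OF H a0 e1]
    define r where "r = rho n"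
    define p where "p = real (rho n) / real n"
    have r1: "1 \<le> r" and rn2: "real r \<le> real n / 2" and p0: "0 < p" and p1: "p < 1"
      and ks: "log 2 (real (kk n)) \<ge> sqrt (real n)" and kpos: "kk n > 0"
      using D(1-6) unfolding r_def p_def by auto
    have I: "5 * eps1 * log 2 (real (kk n)) / log 2 (real n)
     - ((- real r * log 2 p - real (n - r) * log 2 (1 - p)) - log 2 (real (kk n)))
     - (eps1 / 5) * (log 2 (real (kk n)) + r * a) / log 2 (log 2 (real (kk n)) + r * a)
     \<ge> (7/5) * eps1 * r"
      using D(7) unfolding r_def p_def .
    have n16: "real n \<ge> 16" using H(7) .
    have s4: "sqrt (real n) \<ge> 4" using n16 real_sqrt_le_mono[of 16 "real n"] by simp
    have rn: "r \<le> n" using rn2 by simp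
    define V where "V = real (card (Vset n A))"
    have Vk: "V = real (kk n) * real (card A) ^ r"
      unfolding V_def r_def using card_Vset[OF finA] by simp
    have k0: "real (kk n) > 0" using kpos by simp
    have cA0: "real (card A) > 0" using cA by simp
    have V0: "V > 0" using Vk k0 cA0 by simp
    have logV: "log 2 V = log 2 (real (kk n)) + r * a"
      unfolding Vk a_def using k0 cA0 by (simp add: log_mult log_nat_power)
    have ra0: "r * a \<ge> 0" using a0 by simp
    have lV4: "log 2 V \<ge> 4" using logV ks s4 ra0 by linarith
    define LL where "LL = log 2 (log 2 V)"
    have LL0: "LL > 0" unfolding LL_def using lV4 by simp
    have kp: "kprime eps0 n A = real (kk n) * V powr (- eps0 / LL)"
      unfolding kprime_def V_def[symmetric] LL_def by simp
    have kp0: "kprime eps0 n A > 0" unfolding kp using k0 V0 by simp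
    have logkp: "log 2 (kprime eps0 n A) = log 2 (real (kk n)) - eps0 * log 2 V / LL"
      unfolding kp using k0 V0 by (simp add: log_mult log_powr)
    have finS: "finite S" using SV Vset_finite[OF finA] by (rule finite_subset)
    have cS0: "real (card S) > 0" using cS kp0 by linarith
    then have neS: "S \<noteq> {}" by auto
    define L where "L = log 2 (real (card S))"
    have Lge: "L \<ge> log 2 (real (kk n)) - eps0 * log 2 V / LL"
      unfolding L_def logkp[symmetric] using cS kp0 by simp
    have eps0V: "eps0 * log 2 V / LL \<le> (eps1 / 5) * log 2 V / LL"
      using e01 lV4 LL0 by (intro divide_right_mono mult_right_mono) auto
    have sumab: "(\<Sum>i=1..n. alpha S i) + (\<Sum>i=1..n. beta S i) = L"
      using sum_alpha_beta[OF finS neS SV] unfolding L_def by (simp add: sum.distrib)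
    have sq: "(\<Sum>i=1..n. qq S i) = real r"
      using sum_qq[OF finS neS SV finA neA] unfolding r_def .
    have qb: "0 \<le> qq S i" "qq S i \<le> 1" for i
      using qq_bounds[OF finS neS SV finA neA] by auto
    have hle: "(\<Sum>i=1..n. bin_H (qq S i)) \<le> - real r * log 2 p - real (n - r) * log 2 (1 - p)"
    proof -
      have "(\<Sum>i=1..n. bin_H (qq S i)) \<le> (\<Sum>i=1..n. - qq S i * log 2 p - (1 - qq S i) * log 2 (1 - p))"
        by (rule sum_mono) (rule bin_H_le[OF qb p0 p1])
      also have "\<dots> = - (\<Sum>i=1..n. qq S i) * log 2 p - (\<Sum>i=1..n. (1 - qq S i)) * log 2 (1 - p)"
      proof -
        have A1: "(\<Sum>i=1..n. - qq S i * log 2 p) = - (\<Sum>i=1..n. qq S i) * log 2 p"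
          by (simp add: sum_distrib_right sum_negf)
        have A2: "(\<Sum>i=1..n. (1 - qq S i) * log 2 (1 - p)) = (\<Sum>i=1..n. (1 - qq S i)) * log 2 (1 - p)"
          by (simp only: sum_distrib_right)
        show ?thesis by (simp only: sum_subtractf A1 A2)
      qed
      also have "(\<Sum>i=1..n. (1 - qq S i)) = real (n - r)"
        using sq rn by (simp add: sum_subtractf)
      finally show ?thesis using sq by simp
    qed
    define G where "G = {i\<in>{1..n}. good eps1 A S i}"
    have per: "2 * beta S i \<le> (bin_H (qq S i) - alpha S i) + (if good eps1 A S i then 2 * a * qq S i else 0)
        + eps1 * qq S i" for i
    proof -
      have al: "alpha S i \<le> bin_H (qq S i)" by (rule alpha_le[OF finS neS SV finA neA])
      have be: "beta S i \<le> qq S i * a" unfolding a_def by (rule beta_le[OF finS neS SV finA neA])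
      have eq0: "eps1 * qq S i \<ge> 0" using e1 qb(1)[of i] by simp
      have aq0: "a * qq S i \<ge> 0" using a0 qb(1)[of i] by simp
      show ?thesis
      proof (cases "good eps1 A S i")
        case True
        then have "(if good eps1 A S i then 2 * a * qq S i else 0) = 2 * (qq S i * a)" by simp
        then show ?thesis using al be eq0 by linarith
      next
        case False
        then consider "alpha S i < bin_H (qq S i) - 2 * qq S i * a" | "beta S i < eps1 / 2 * qq S i"
          unfolding good_def a_def by linarith
        then show ?thesis
        proof cases
          case 1
          have "(if good eps1 A S i then 2 * a * qq S i else 0) = 0" using False by simp
          moreover have "2 * qq S i * a = 2 * (qq S i * a)" by simp
          ultimately show ?thesis using 1 be eq0 by linarith
        next
          case 2
          have "(if good eps1 A S i then 2 * a * qq S i else 0) = 0" using False by simp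
          moreover have "eps1 / 2 * qq S i = (eps1 * qq S i) / 2" by simp
          ultimately show ?thesis using 2 al by linarith
        qed
      qed
    qed
    have sumper: "2 * (\<Sum>i=1..n. beta S i) \<le> ((\<Sum>i=1..n. bin_H (qq S i)) - (\<Sum>i=1..n. alpha S i))
        + 2 * a * (\<Sum>i\<in>G. qq S i) + eps1 * r"
    proof -
      have "2 * (\<Sum>i=1..n. beta S i) = (\<Sum>i=1..n. 2 * beta S i)" by (simp add: sum_distrib_left)
      also have "\<dots> \<le> (\<Sum>i=1..n. (bin_H (qq S i) - alpha S i) + (if good eps1 A S i then 2 * a * qq S i else 0)
        + eps1 * qq S i)" by (rule sum_mono) (rule per)
      also have "\<dots> = ((\<Sum>i=1..n. bin_H (qq S i)) - (\<Sum>i=1..n. alpha S i))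
        + (\<Sum>i=1..n. if good eps1 A S i then 2 * a * qq S i else 0) + eps1 * (\<Sum>i=1..n. qq S i)"
        by (simp add: sum.distrib sum_subtractf sum_distrib_left)
      also have "(\<Sum>i=1..n. if good eps1 A S i then 2 * a * qq S i else 0) = 2 * a * (\<Sum>i\<in>G. qq S i)"
        unfolding G_def sum_distrib_left by (rule sum.inter_filter[symmetric]) simp
      finally show ?thesis using sq by simp
    qed
    define Q where "Q = (\<Sum>i\<in>G. qq S i)"
    have Qmain: "2 * a * Q \<ge> (2/5) * eps1 * r"
    proof -
      have "(\<Sum>i=1..n. beta S i) \<le> (\<Sum>i=1..n. bin_H (qq S i)) - L + 2 * a * Q + eps1 * r"
        using sumper sumab unfolding Q_def by linarith
      moreover have "(\<Sum>i=1..n. bin_H (qq S i)) - L \<le>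
          (- real r * log 2 p - real (n - r) * log 2 (1 - p)) - log 2 (real (kk n)) + (eps1 / 5) * log 2 V / LL"
        using hle Lge eps0V by linarith
      moreover have "(eps1 / 5) * log 2 V / LL = (eps1 / 5) * (log 2 (real (kk n)) + r * a) / log 2 (log 2 (real (kk n)) + r * a)"
        unfolding LL_def logV by simp
      ultimately show ?thesis using I hb by linarith
    qed
    show "(\<Sum>i\<in>{i\<in>{1..n}. good eps1 A S i}. (qq S i)\<^sup>2)
          \<ge> (eps1 * real (rho n) / 5)\<^sup>2 / (real n * (log 2 (real (card A)))\<^sup>2)"
    proof (cases "card A = 1")
      case True
      then have "log 2 (real (card A)) = 0" by simp
      then show ?thesis by (simp add: sum_nonneg)
    next
      case False
      then have "card A \<ge> 2" using cA by simp
      then have a1: "a \<ge> 1" unfolding a_def by simp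
      have Qge: "Q \<ge> eps1 * r / (5 * a)" using Qmain a1 by (simp add: field_simps)
      have Q0: "0 \<le> eps1 * r / (5 * a)" using e1 a1 by simp
      have finG: "finite G" unfolding G_def by simp
      have "card G \<le> card {1..n}" unfolding G_def by (rule card_mono) auto
      then have cG: "card G \<le> n" by simp
      have CS: "Q^2 \<le> (\<Sum>i\<in>G. (qq S i)^2) * card G"
        unfolding Q_def by (rule sum_squared_le_sum_of_squares)
      have sq0: "(\<Sum>i\<in>G. (qq S i)^2) \<ge> 0" by (simp add: sum_nonneg)
      have "Q^2 \<le> (\<Sum>i\<in>G. (qq S i)^2) * n"
        using CS cG sq0 by (smt (verit) mult_left_mono of_nat_le_iff)
      moreover have "(eps1 * r / (5 * a))^2 \<le> Q^2" using Qge Q0 by (intro power_mono) auto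
      ultimately have "(eps1 * r / (5 * a))^2 \<le> (\<Sum>i\<in>G. (qq S i)^2) * n" by linarith
      moreover have "(eps1 * r / (5 * a))^2 = (eps1 * r / 5)^2 / a^2" by (simp add: power_divide power_mult_distrib)
      ultimately have X: "(eps1 * r / 5)^2 / a^2 \<le> (\<Sum>i\<in>G. (qq S i)^2) * n" by simp
      have npos: "real n > 0" using n16 by simp
      have "(eps1 * r / 5)^2 / a^2 / n \<le> (\<Sum>i\<in>G. (qq S i)^2)"
        using X npos by (simp only: pos_divide_le_eq)
      moreover have "(eps1 * r / 5)^2 / a^2 / n = (eps1 * r / 5)^2 / (n * a^2)"
        by (simp add: divide_divide_eq_left mult.commute)
      ultimately show ?thesis unfolding G_def r_def a_def by (simp only:)
    qed
  qed
qed

end
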